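(* Under the setting in the context (in particular $\hat\tau$ permutation-invariant), for every $j\in\mathcal U$ and $k\in\mathcal C$, $$\mathbb E\Big[\frac{\mathbf 1\{R_j>\mathcal Q_j,\ T_k\le\hat\tau,\ T_j\le\hat\tau\}}{\sum_{i\in\mathcal C\cup\{j\}}\mathbf 1\{T_i\le\hat\tau\}}\Big]=\mathbb E\Big[\frac{\mathbf 1\{R_k>\mathcal Q_j,\ T_k\le\hat\tau,\ T_j\le\hat\tau\}}{\sum_{i\in\mathcal C\cup\{j\}}\mathbf 1\{T_i\le\hat\tau\}}\Big],$$ where $\mathcal Q_j$ is the $\lceil(1-\alpha)(|\hat{\mathcal S}_c|+1)\rceil$-th smallest value of $\{R_i: i\in\hat{\mathcal S}_c\cup\{j\}\}$.
   Context: Setting: $\hat\mu,g:\mathbb R^d\to\mathbb R$ fixed deterministic measurable functions; calibration indices $\mathcal C$ ($|\mathcal C|=n$) and disjoint test indices $\mathcal U$ ($|\mathcal U|=m$); $(X_i,Y_i)$, $i\in\mathcal C\cup\mathcal U$, i.i.d.; $T_i=g(X_i)$, $R_i=|Y_i-\hat\mu(X_i)|$; $\alpha\in(0,1)$. The threshold is $\hat\tau=\tau(T_i:i\in\mathcal C\cup\mathcal U)$ for a deterministic measurable $\tau:\mathbb R^{n+m}\to\mathbb R$ invariant under permutations of its arguments, and $\hat{\mathcal S}_c=\{i\in\mathcal C:T_i\le\hat\tau\}$. The ratio inside the expectations is interpreted as $0$ when the indicator in the numerator is $0$. *)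

theory Defs
  imports "HOL-Probability.Probability" "HOL-Library.Multiset"
begin

definition kth_smallest :: "nat \<Rightarrow> real multiset \<Rightarrow> real" where
  "kth_smallest r A = sorted_list_of_multiset A ! (r - 1)"

definition sel_cal :: "nat set \<Rightarrow> (nat \<Rightarrow> real) \<Rightarrow> real \<Rightarrow> nat set" where
  "sel_cal C T thr = {i \<in> C. T i \<le> thr}"

definition conf_quantile :: "real \<Rightarrow> nat set \<Rightarrow> (nat \<Rightarrow> real) \<Rightarrow> nat \<Rightarrow> real" where
  "conf_quantile alpha S R j =
     kth_smallest (nat \<lceil>(1 - alpha) * (real (card S) + 1)\<rceil>) (image_mset R (mset_set (insert j S)))"

end

theory Submission
  imports Defs
begin

lemma sorted_nth_less_iff:
  fixes xs :: "real list"
  shows "sorted xs \<Longrightarrow> i < length xs \<Longrightarrow> (xs ! i < a \<longleftrightarrow> i < length (filter (\<lambda>x. x < a) xs))"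
proof (induction xs arbitrary: i)
  case Nil then show ?case by simp
next
  case (Cons y ys)
  have ge: "\<forall>x\<in>set ys. y \<le> x" using Cons.prems(1) by simp
  show ?case
  proof (cases i)
    case 0
    show ?thesis
    proof (cases "y < a")
      case True then show ?thesis using 0 by simp
    next
      case False
      then have "filter (\<lambda>x. x < a) ys = []" using ge by (auto simp: filter_empty_conv)
      then show ?thesis using 0 False by simp
    qed
  next
    case (Suc i')
    have IH: "ys ! i' < a \<longleftrightarrow> i' < length (filter (\<lambda>x. x < a) ys)"
      using Cons Suc by simp
    show ?thesis
    proof (cases "y < a")
      case True then show ?thesis using Suc IH by simp
    next
      case False
      then have e: "filter (\<lambda>x. x < a) ys = []" using ge by (auto simp: filter_empty_conv)
      have "y \<le> ys ! i'" using ge Cons.prems(2) Suc by simp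
      then show ?thesis using Suc e False by simp
    qed
  qed
qed

lemma cq_char:
  fixes R :: "nat \<Rightarrow> real"
  assumes "finite S" "j \<notin> S" "0 < alpha" "alpha < 1"
  shows "(a > conf_quantile alpha S R j) \<longleftrightarrow>
         nat \<lceil>(1 - alpha) * (real (card S) + 1)\<rceil> \<le> card {i \<in> insert j S. R i < a}"
proof -
  define A where "A = insert j S"
  define r where "r = nat \<lceil>(1 - alpha) * (real (card S) + 1)\<rceil>"
  define xs where "xs = sorted_list_of_multiset (image_mset R (mset_set A))"
  have fA: "finite A" using assms A_def by simp
  have cA: "card A = card S + 1" using assms A_def by simp
  have pos: "(1 - alpha) * (real (card S) + 1) > 0" using assms by simp
  have le: "(1 - alpha) * (real (card S) + 1) \<le> real (card S) + 1" using assms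
    by (simp add: mult_left_le_one_le)
  have r1: "1 \<le> r" unfolding r_def using pos by linarith
  have r2: "r \<le> card S + 1" unfolding r_def using le
    by (metis ceiling_mono ceiling_of_nat nat_le_iff of_nat_1 of_nat_add)
  have len: "length xs = card A"
    by (metis xs_def size_mset mset_sorted_list_of_multiset size_image_mset size_mset_set)
  have srt: "sorted xs" unfolding xs_def by simp
  have cnt: "card {i \<in> A. R i < a} = length (filter (\<lambda>x. x < a) xs)"
  proof -
    have "length (filter (\<lambda>x. x < a) xs) = size (filter_mset (\<lambda>x. x < a) (mset xs))"
      by (metis size_mset mset_filter)
    also have "\<dots> = size (filter_mset (\<lambda>x. x < a) (image_mset R (mset_set A)))"
      by (simp add: xs_def)
    also have "\<dots> = size (image_mset R (filter_mset (\<lambda>i. R i < a) (mset_set A)))"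
      by (simp add: filter_mset_image_mset)
    also have "\<dots> = card {i \<in> A. R i < a}"
      using fA by (simp add: filter_mset_mset_set)
    finally show ?thesis by simp
  qed
  have "conf_quantile alpha S R j = xs ! (r - 1)"
    unfolding conf_quantile_def kth_smallest_def xs_def A_def r_def by simp
  moreover have "xs ! (r - 1) < a \<longleftrightarrow> r - 1 < length (filter (\<lambda>x. x < a) xs)"
    using sorted_nth_less_iff[OF srt, of "r - 1" a] len cA r1 r2 by simp
  ultimately have "a > conf_quantile alpha S R j \<longleftrightarrow> r \<le> card {i \<in> A. R i < a}"
    using r1 cnt by auto
  then show ?thesis unfolding A_def r_def .
qed

lemma meas_card:
  assumes "finite A" "\<And>i. i \<in> A \<Longrightarrow> Measurable.pred N (P i)"
  shows "(\<lambda>z. card {i \<in> A. P i z}) \<in> measurable N (count_space UNIV)"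
  using assms
proof (induction A rule: finite_induct)
  case empty then show ?case by simp
next
  case (insert c A)
  have e: "(\<lambda>z. card {i \<in> insert c A. P i z}) =
     (\<lambda>z. if P c z then Suc (card {i \<in> A. P i z}) else card {i \<in> A. P i z})"
  proof
    fix z
    have "{i \<in> insert c A. P i z} = (if P c z then insert c {i \<in> A. P i z} else {i \<in> A. P i z})"
      by auto
    then show "card {i \<in> insert c A. P i z} = (if P c z then Suc (card {i \<in> A. P i z}) else card {i \<in> A. P i z})"
      using insert by auto
  qed
  have m: "(\<lambda>z. card {i \<in> A. P i z}) \<in> measurable N (count_space UNIV)"
    using insert by auto
  show ?case unfolding e
    apply (rule measurable_If)
      apply (rule measurable_compose[OF m]) apply (simp)
     apply (rule m)
    apply (rule pred_def[THEN iffD1]) using insert.prems by simp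
qed

definition Tz :: "('v \<Rightarrow> real) \<Rightarrow> (nat \<Rightarrow> 'v \<times> real) \<Rightarrow> nat \<Rightarrow> real" where
  "Tz g z i = g (fst (z i))"
definition Rz :: "('v \<Rightarrow> real) \<Rightarrow> (nat \<Rightarrow> 'v \<times> real) \<Rightarrow> nat \<Rightarrow> real" where
  "Rz mu z i = \<bar>snd (z i) - mu (fst (z i))\<bar>"
definition thz :: "((nat \<Rightarrow> real) \<Rightarrow> real) \<Rightarrow> ('v \<Rightarrow> real) \<Rightarrow> nat set \<Rightarrow> (nat \<Rightarrow> 'v \<times> real) \<Rightarrow> real" where
  "thz tau g I z = tau (restrict (Tz g z) I)"

definition Gf where
  "Gf alpha I C j k g mu tau a z =
    (if nat \<lceil>(1 - alpha) * (real (card {i\<in>C. Tz g z i \<le> thz tau g I z}) + 1)\<rceil>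
         \<le> card {i\<in>insert j C. (i = j \<or> Tz g z i \<le> thz tau g I z) \<and> Rz mu z i < Rz mu z a}
        \<and> Tz g z k \<le> thz tau g I z \<and> Tz g z j \<le> thz tau g I z
     then 1 / real (card {i\<in>insert j C. Tz g z i \<le> thz tau g I z}) else 0)"

lemma Gf_meas:
  fixes g mu :: "'v::euclidean_space \<Rightarrow> real" and tau :: "(nat \<Rightarrow> real) \<Rightarrow> real"
  assumes fC: "finite C" and CI: "C \<subseteq> I" and jI: "j \<in> I" and kI: "k \<in> I" and aI: "a \<in> I"
    and gm: "g \<in> borel_measurable borel" and mum: "mu \<in> borel_measurable borel"
    and taum: "tau \<in> borel_measurable (PiM I (\<lambda>_. borel))"
  shows "Gf alpha I C j k g mu tau a \<in> borel_measurable (PiM I (\<lambda>_. (borel :: ('v \<times> real) measure)))"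
proof -
  let ?N = "PiM I (\<lambda>_. (borel :: ('v \<times> real) measure))"
  have mf: "fst \<in> borel_measurable (borel :: ('v \<times> real) measure)"
    by (subst borel_prod[symmetric]) (rule measurable_fst)
  have ms: "snd \<in> borel_measurable (borel :: ('v \<times> real) measure)"
    by (subst borel_prod[symmetric]) (rule measurable_snd)
  have mzf: "(\<lambda>z. fst (z i)) \<in> borel_measurable ?N" if "i \<in> I" for i
    by (rule measurable_compose[OF measurable_component_singleton[OF that] mf])
  have mzs: "(\<lambda>z. snd (z i)) \<in> borel_measurable ?N" if "i \<in> I" for i
    by (rule measurable_compose[OF measurable_component_singleton[OF that] ms])
  have mT: "(\<lambda>z. Tz g z i) \<in> borel_measurable ?N" if "i \<in> I" for i
    unfolding Tz_def by (rule measurable_compose[OF mzf[OF that] gm])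
  have mR: "(\<lambda>z. Rz mu z i) \<in> borel_measurable ?N" if "i \<in> I" for i
    unfolding Rz_def using measurable_compose[OF mzf[OF that] mum] mzs[OF that] by measurable
  have mth: "(\<lambda>z. thz tau g I z) \<in> borel_measurable ?N"
    unfolding thz_def
    by (rule measurable_compose[OF measurable_restrict taum]) (rule mT)
  have pT: "Measurable.pred ?N (\<lambda>z. Tz g z i \<le> thz tau g I z)" if "i \<in> I" for i
    unfolding pred_def by (rule borel_measurable_le[OF mT[OF that] mth])
  have pR: "Measurable.pred ?N (\<lambda>z. Rz mu z i < Rz mu z a)" if "i \<in> I" for i
    unfolding pred_def by (rule borel_measurable_less[OF mR[OF that] mR[OF aI]])
  have cS: "(\<lambda>z. card {i\<in>C. Tz g z i \<le> thz tau g I z}) \<in> measurable ?N (count_space UNIV)"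
    using fC CI by (intro meas_card pT) auto
  have cD: "(\<lambda>z. card {i\<in>insert j C. Tz g z i \<le> thz tau g I z}) \<in> measurable ?N (count_space UNIV)"
    using fC CI jI by (intro meas_card pT) auto
  have cB: "(\<lambda>z. card {i\<in>insert j C. (i = j \<or> Tz g z i \<le> thz tau g I z) \<and> Rz mu z i < Rz mu z a}) \<in> measurable ?N (count_space UNIV)"
    using fC CI jI by (intro meas_card pred_intros_logic pT pR) auto
  have p1: "Measurable.pred ?N (\<lambda>z. nat \<lceil>(1 - alpha) * (real (card {i\<in>C. Tz g z i \<le> thz tau g I z}) + 1)\<rceil>
         \<le> card {i\<in>insert j C. (i = j \<or> Tz g z i \<le> thz tau g I z) \<and> Rz mu z i < Rz mu z a})"
    apply (rule measurable_compose_countable[where g="\<lambda>z. card {i\<in>C. Tz g z i \<le> thz tau g I z}"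
        and f="\<lambda>s z. nat \<lceil>(1 - alpha) * (real s + 1)\<rceil>
         \<le> card {i\<in>insert j C. (i = j \<or> Tz g z i \<le> thz tau g I z) \<and> Rz mu z i < Rz mu z a}"])
     apply (rule measurable_compose[OF cB]) apply simp
    by (rule cS)
  have mD: "(\<lambda>z. 1 / real (card {i\<in>insert j C. Tz g z i \<le> thz tau g I z})) \<in> borel_measurable ?N"
    by (rule measurable_compose[OF cD]) simp
  show ?thesis
    unfolding Gf_def
    apply (rule measurable_If[OF mD measurable_const])
     apply simp
    apply (rule pred_def[THEN iffD1])
    by (intro pred_intros_logic p1 pT kI jI)
qed

lemma Gf_swap:
  fixes tau :: "(nat \<Rightarrow> real) \<Rightarrow> real"
  assumes CI: "C \<subseteq> I" and jI: "j \<in> I" and kC: "k \<in> C" and jC: "j \<notin> C"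
    and inv: "\<forall>\<pi> t. \<pi> permutes I \<longrightarrow> tau (restrict (t \<circ> \<pi>) I) = tau (restrict t I)"
  shows "Gf alpha I C j k g mu tau j (\<lambda>n\<in>I. z (Transposition.transpose j k n)) = Gf alpha I C j k g mu tau k z"
proof -
  let ?s = "Transposition.transpose j k"
  let ?z = "\<lambda>n\<in>I. z (?s n)"
  have kI: "k \<in> I" using kC CI by auto
  have jk: "j \<noteq> k" using kC jC by auto
  have sI: "?s i \<in> I" if "i \<in> I" for i using that jI kI by (auto simp: Transposition.transpose_def)
  have T': "Tz g ?z i = Tz g z (?s i)" if "i \<in> I" for i using that by (simp add: Tz_def)
  have R': "Rz mu ?z i = Rz mu z (?s i)" if "i \<in> I" for i using that by (simp add: Rz_def)
  have th: "thz tau g I ?z = thz tau g I z"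
  proof -
    have "restrict (Tz g ?z) I = restrict (Tz g z \<circ> ?s) I"
      using T' by (auto simp: restrict_def)
    moreover have "?s permutes I" using jI kI by (rule permutes_swap_id)
    ultimately show ?thesis unfolding thz_def using inv by metis
  qed
  define th0 where "th0 = thz tau g I z"
  have Tj: "Tz g ?z j = Tz g z k" and Tk: "Tz g ?z k = Tz g z j"
    using T' jI kI by auto
  have Rj: "Rz mu ?z j = Rz mu z k" using R' jI by auto
  show ?thesis
  proof (cases "Tz g z k \<le> th0 \<and> Tz g z j \<le> th0")
    case False
    then show ?thesis unfolding Gf_def using th Tj Tk th0_def by auto
  next
    case True
    have e1: "{i\<in>C. Tz g ?z i \<le> thz tau g I ?z} = {i\<in>C. Tz g z i \<le> thz tau g I z}"
    proof -
      have "Tz g ?z i \<le> th0 \<longleftrightarrow> Tz g z i \<le> th0" if "i \<in> C" for i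
        using that T'[of i] subsetD[OF CI that] jC True Tk by (cases "i = k") (auto simp: Transposition.transpose_def)
      then show ?thesis using th th0_def by auto
    qed
    have e2: "{i\<in>insert j C. Tz g ?z i \<le> thz tau g I ?z} = {i\<in>insert j C. Tz g z i \<le> thz tau g I z}"
    proof -
      have "Tz g ?z i \<le> th0 \<longleftrightarrow> Tz g z i \<le> th0" if "i \<in> insert j C" for i
        using that T'[of i] CI jI True Tk Tj by (cases "i = k \<or> i = j") (auto simp: Transposition.transpose_def)
      then show ?thesis using th th0_def by auto
    qed
    define B where "B = {i\<in>insert j C. (i = j \<or> Tz g z i \<le> th0) \<and> Rz mu z i < Rz mu z k}"
    have e3: "{i\<in>insert j C. (i = j \<or> Tz g ?z i \<le> thz tau g I ?z) \<and> Rz mu ?z i < Rz mu ?z j} = ?s ` B"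
    proof (rule set_eqI)
      fix i
      have iff: "i \<in> ?s ` B \<longleftrightarrow> ?s i \<in> B"
        by (metis image_iff transpose_involutory)
      show "i \<in> {i\<in>insert j C. (i = j \<or> Tz g ?z i \<le> thz tau g I ?z) \<and> Rz mu ?z i < Rz mu ?z j} \<longleftrightarrow> i \<in> ?s ` B"
        unfolding iff
      proof (cases "i = j \<or> i = k")
        case True
        then show "i \<in> {i\<in>insert j C. (i = j \<or> Tz g ?z i \<le> thz tau g I ?z) \<and> Rz mu ?z i < Rz mu ?z j} \<longleftrightarrow> ?s i \<in> B"
          using \<open>Tz g z k \<le> th0 \<and> Tz g z j \<le> th0\<close> Tj Tk Rj R' th kC jI kI unfolding B_def th0_def
          by (auto simp: Transposition.transpose_def)
      next
        case False
        then have si: "?s i = i" by (simp add: Transposition.transpose_def)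
        show "i \<in> {i\<in>insert j C. (i = j \<or> Tz g ?z i \<le> thz tau g I ?z) \<and> Rz mu ?z i < Rz mu ?z j} \<longleftrightarrow> ?s i \<in> B"
          using False si T'[of i] R'[of i] Rj th CI unfolding B_def th0_def by auto
      qed
    qed
    have cB: "card (?s ` B) = card B"
      by (rule card_image) (auto simp: inj_on_def dest: transpose_eq_imp_eq)
    show ?thesis
      apply (simp only: Gf_def e1 e2 e3 cB)
      unfolding B_def using True th Tj Tk th0_def by simp
  qed
qed

theorem lemma8:
  fixes M :: "'a measure"
    and X :: "nat \<Rightarrow> 'a \<Rightarrow> real ^ 'd"
    and Y :: "nat \<Rightarrow> 'a \<Rightarrow> real"
    and mu g :: "real ^ 'd \<Rightarrow> real"
    and tau :: "(nat \<Rightarrow> real) \<Rightarrow> real"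
    and P :: "((real ^ 'd) \<times> real) measure"
    and C U :: "nat set" and n m :: nat and alpha :: real
    and j k :: nat
  assumes "prob_space M"
    and "finite C" "finite U" "card C = n" "card U = m" "C \<inter> U = {}"
    and "prob_space.indep_vars M (\<lambda>_. borel) (\<lambda>i \<omega>. (X i \<omega>, Y i \<omega>)) (C \<union> U)"
    and "\<forall>i \<in> C \<union> U. distr M borel (\<lambda>\<omega>. (X i \<omega>, Y i \<omega>)) = P"
    and "mu \<in> borel_measurable borel" "g \<in> borel_measurable borel"
    and "tau \<in> borel_measurable (PiM (C \<union> U) (\<lambda>_. borel))"
    and "\<forall>\<pi> t. \<pi> permutes (C \<union> U) \<longrightarrow>
           tau (restrict (t \<circ> \<pi>) (C \<union> U)) = tau (restrict t (C \<union> U))"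
    and "0 < alpha" "alpha < 1"
    and "j \<in> U" "k \<in> C"
  shows
    "(let T = (\<lambda>i \<omega>. g (X i \<omega>));
          R = (\<lambda>i \<omega>. \<bar>Y i \<omega> - mu (X i \<omega>)\<bar>);
          th = (\<lambda>\<omega>. tau (restrict (\<lambda>i. T i \<omega>) (C \<union> U)));
          Q = (\<lambda>\<omega>. conf_quantile alpha (sel_cal C (\<lambda>i. T i \<omega>) (th \<omega>)) (\<lambda>i. R i \<omega>) j);
          D = (\<lambda>\<omega>. real (card {i \<in> insert j C. T i \<omega> \<le> th \<omega>}))
      in (\<integral>\<omega>. (if R j \<omega> > Q \<omega> \<and> T k \<omega> \<le> th \<omega> \<and> T j \<omega> \<le> th \<omega> then 1 / D \<omega> else 0) \<partial>M)
       = (\<integral>\<omega>. (if R k \<omega> > Q \<omega> \<and> T k \<omega> \<le> th \<omega> \<and> T j \<omega> \<le> th \<omega> then 1 / D \<omega> else 0) \<partial>M))"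
proof -
  note A = assms
  interpret p: prob_space M by (rule A(1))
  define I where "I = C \<union> U"
  define Z where "Z = (\<lambda>i \<omega>. (X i \<omega>, Y i \<omega>))"
  define V where "V = (\<lambda>\<omega>. \<lambda>i\<in>I. Z i \<omega>)"
  define \<sigma> where "\<sigma> = Transposition.transpose j k"
  define G where "G = Gf alpha I C j k g mu tau"
  let ?Pb = "PiM I (\<lambda>_. (borel :: ((real ^ 'd) \<times> real) measure))"
  let ?PP = "PiM I (\<lambda>_. P)"
  have CI: "C \<subseteq> I" and jI: "j \<in> I" and kI: "k \<in> I" and jC: "j \<notin> C"
    using A I_def by auto
  have fC: "finite C" using A by simp
  have ind: "p.indep_vars (\<lambda>_. borel) Z I" using A(7) unfolding Z_def I_def .
  have rv: "p.random_variable borel (Z i)" if "i \<in> I" for i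
    using ind that unfolding p.indep_vars_def2 by auto
  have Ine: "I \<noteq> {}" using jI by auto
  have dist: "distr M ?Pb V = ?PP"
  proof -
    have iff: "p.indep_vars (\<lambda>_. borel) Z I \<longleftrightarrow>
        distr M ?Pb (\<lambda>x. \<lambda>i\<in>I. Z i x) = PiM I (\<lambda>i. distr M borel (Z i))"
      by (rule p.indep_vars_iff_distr_eq_PiM'[OF Ine]) (rule rv)
    have "distr M ?Pb V = PiM I (\<lambda>i. distr M borel (Z i))"
      unfolding V_def using iff ind by simp
    also have "\<dots> = ?PP"
      by (rule PiM_cong) (use A(8) in \<open>auto simp: Z_def I_def\<close>)
    finally show ?thesis .
  qed
  have Vm: "V \<in> measurable M ?Pb"
    unfolding V_def by (rule measurable_restrict) (rule rv)
  have PZ: "P = distr M borel (Z j)" using A(8) jI by (simp add: Z_def I_def)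
  have Pprob: "prob_space P" unfolding PZ by (rule p.prob_space_distr) (rule rv[OF jI])
  have setsP: "sets P = sets borel" unfolding PZ by simp
  have setsPP: "sets ?PP = sets ?Pb" by (rule sets_PiM_cong) (auto simp: setsP)
  have sperm: "\<sigma> permutes I" unfolding \<sigma>_def using jI kI by (rule permutes_swap_id)
  have sw: "distr ?PP ?PP (\<lambda>\<omega>. \<lambda>n\<in>I. \<omega> (\<sigma> n)) = ?PP"
    using distr_PiM_reindex[of I "\<lambda>_. P" \<sigma> I] Pprob permutes_inj_on[OF sperm]
      permutes_in_image[OF sperm] by auto
  have swm: "(\<lambda>\<omega>. \<lambda>n\<in>I. \<omega> (\<sigma> n)) \<in> measurable ?PP ?PP"
    by (rule measurable_restrict) (rule measurable_component_singleton, simp add: permutes_in_image[OF sperm])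
  have taum: "tau \<in> borel_measurable (PiM I (\<lambda>_. borel))" using A(11) unfolding I_def .
  have Gmb: "G a \<in> borel_measurable ?Pb" if "a \<in> I" for a
    unfolding G_def by (rule Gf_meas[OF fC CI jI kI that A(10) A(9) taum])
  have Gm: "G a \<in> borel_measurable ?PP" if "a \<in> I" for a
    by (subst measurable_cong_sets[OF setsPP refl]) (rule Gmb[OF that])
  have inv: "\<forall>\<pi> t. \<pi> permutes I \<longrightarrow> tau (restrict (t \<circ> \<pi>) I) = tau (restrict t I)"
    using A(12) unfolding I_def .
  have int_eq: "(\<integral>\<omega>. G j (V \<omega>) \<partial>M) = (\<integral>\<omega>. G k (V \<omega>) \<partial>M)"
  proof -
    have "(\<integral>\<omega>. G j (V \<omega>) \<partial>M) = integral\<^sup>L (distr M ?Pb V) (G j)"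
      by (rule integral_distr[symmetric, OF Vm Gmb[OF jI]])
    also have "\<dots> = integral\<^sup>L ?PP (G j)" by (simp add: dist)
    also have "\<dots> = integral\<^sup>L (distr ?PP ?PP (\<lambda>\<omega>. \<lambda>n\<in>I. \<omega> (\<sigma> n))) (G j)" by (simp add: sw)
    also have "\<dots> = (\<integral>z. G j (\<lambda>n\<in>I. z (\<sigma> n)) \<partial>?PP)"
      by (rule integral_distr[OF swm Gm[OF jI]])
    also have "\<dots> = (\<integral>z. G k z \<partial>?PP)"
      unfolding G_def \<sigma>_def by (intro arg_cong[where f="integral\<^sup>L ?PP"] ext Gf_swap[OF CI jI A(16) jC inv])
    also have "\<dots> = integral\<^sup>L (distr M ?Pb V) (G k)" by (simp add: dist)
    also have "\<dots> = (\<integral>\<omega>. G k (V \<omega>) \<partial>M)"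
      by (rule integral_distr[OF Vm Gmb[OF kI]])
    finally show ?thesis .
  qed
  define T where "T = (\<lambda>i \<omega>. g (X i \<omega>))"
  define R where "R = (\<lambda>i \<omega>. \<bar>Y i \<omega> - mu (X i \<omega>)\<bar>)"
  define th where "th = (\<lambda>\<omega>. tau (restrict (\<lambda>i. T i \<omega>) (C \<union> U)))"
  define Q where "Q = (\<lambda>\<omega>. conf_quantile alpha (sel_cal C (\<lambda>i. T i \<omega>) (th \<omega>)) (\<lambda>i. R i \<omega>) j)"
  define D where "D = (\<lambda>\<omega>. real (card {i \<in> insert j C. T i \<omega> \<le> th \<omega>}))"
  have pw: "(if R a \<omega> > Q \<omega> \<and> T k \<omega> \<le> th \<omega> \<and> T j \<omega> \<le> th \<omega> then 1 / D \<omega> else 0) = G a (V \<omega>)"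
    if aI: "a \<in> I" for a \<omega>
  proof -
    have VT: "Tz g (V \<omega>) i = T i \<omega>" if "i \<in> I" for i
      using that by (simp add: V_def Z_def Tz_def T_def)
    have VR: "Rz mu (V \<omega>) i = R i \<omega>" if "i \<in> I" for i
      using that by (simp add: V_def Z_def Rz_def R_def)
    have Vth: "thz tau g I (V \<omega>) = th \<omega>"
    proof -
      have "restrict (Tz g (V \<omega>)) I = restrict (\<lambda>i. T i \<omega>) I"
        using VT by (auto simp: restrict_def)
      then show ?thesis unfolding thz_def th_def I_def by simp
    qed
    define S where "S = sel_cal C (\<lambda>i. T i \<omega>) (th \<omega>)"
    have fS: "finite S" using fC by (simp add: S_def sel_cal_def)
    have jS: "j \<notin> S" using jC by (simp add: S_def sel_cal_def)
    have Qc: "R a \<omega> > Q \<omega> \<longleftrightarrow>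
       nat \<lceil>(1 - alpha) * (real (card S) + 1)\<rceil> \<le> card {i \<in> insert j S. R i \<omega> < R a \<omega>}"
      unfolding Q_def S_def[symmetric] by (rule cq_char[OF fS jS A(13) A(14)])
    have c1: "S = {i\<in>C. Tz g (V \<omega>) i \<le> thz tau g I (V \<omega>)}"
      using VT CI Vth by (auto simp: S_def sel_cal_def)
    have c2: "{i \<in> insert j S. R i \<omega> < R a \<omega>} =
       {i\<in>insert j C. (i = j \<or> Tz g (V \<omega>) i \<le> thz tau g I (V \<omega>)) \<and> Rz mu (V \<omega>) i < Rz mu (V \<omega>) a}"
      using VT VR CI Vth aI jI by (auto simp: S_def sel_cal_def)
    have c3: "{i \<in> insert j C. T i \<omega> \<le> th \<omega>} = {i\<in>insert j C. Tz g (V \<omega>) i \<le> thz tau g I (V \<omega>)}"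
      using VT CI Vth jI by auto
    show ?thesis
      unfolding G_def Gf_def Qc c2 D_def c3 c1[symmetric] using VT[OF kI] VT[OF jI] Vth by simp
  qed
  have "(\<integral>\<omega>. (if R j \<omega> > Q \<omega> \<and> T k \<omega> \<le> th \<omega> \<and> T j \<omega> \<le> th \<omega> then 1 / D \<omega> else 0) \<partial>M)
      = (\<integral>\<omega>. (if R k \<omega> > Q \<omega> \<and> T k \<omega> \<le> th \<omega> \<and> T j \<omega> \<le> th \<omega> then 1 / D \<omega> else 0) \<partial>M)"
    using int_eq pw[OF jI] pw[OF kI] by simp
  then show ?thesis unfolding Let_def T_def R_def th_def Q_def D_def .
qed

end
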